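(* Let $P\in\Omega[y_0,\ldots,y_n]$ be non-zero and let $r(x)=c_0x^{\nu_0}+\cdots+c_kx^{\nu_k}$ be a generalized polynomial ($c_i\ne0$, $\nu_0<\cdots<\nu_k$). Put $P_0=P$, $P_{i+1}=P_i[c_ix^{\nu_i}]$ for $i=0,\ldots,k$, and $Q=P[r(x)]=P_{k+1}$. Then $r(x)$ is admissible for $P$ if and only if the lowest point of $E_{\nu_k}(Q)$ has height (ordinate) greater than or equal to $1$.
   Context: $\Omega$: field of generalized power series $\sum_{i\ge1}c_ix^{\mu_i}$, $c_i\in\mathbb{C}$, $\mu_i\in\mathbb{R}$ strictly increasing, $\mu_i\to\infty$ if infinitely many terms. The operator $'$ is one fixed choice among: (a) $\frac{d}{dx}$ (set $\varepsilon=1$, $[\mu]=\mu$, $T^{\langle e_\kappa\rangle}=T(T-1)\cdots(T-\kappa+1)$); (b) $x\frac{d}{dx}$ ($\varepsilon=0$, $[\mu]=\mu$, $T^{\langle e_\kappa\rangle}=T^\kappa$); (c) $s'(x)=s(qx)$, $\sum c_ix^{\mu_i}\mapsto\sum c_iq^{\mu_i}x^{\mu_i}$, fixed $q\in\mathbb{C}$, $|q|\ne1$ ($\varepsilon=0$, $[\mu]=q^\mu$, $T^{\langle e_\kappa\rangle}=T^\kappa$). For $\rho\in\mathbb{Z}_{\ge0}^{n+1}$: $|\rho|=\sum\rho_\kappa$, $\omega(\rho)=\sum\kappa\rho_\kappa$, $T^{\langle\rho\rangle}=\prod_\kappa (T^{\langle e_\kappa\rangle})^{\rho_\kappa}$,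 $y^\rho=\prod y_\kappa^{\rho_\kappa}$. Full substitution: $P[s]=P(s+y_0,s'+y_1,\ldots,s^{(n)}+y_n)$. Write uniquely $P=\sum_\rho\sum_\alpha P_{(\alpha,\rho)}x^{\alpha+\varepsilon\omega(\rho)}y^\rho$ with $P_{(\alpha,\rho)}\in\mathbb{C}$. Cloud: $\mathcal{C}(P)=\{(\alpha,h): P_{(\alpha,\rho)}\ne0$ for some $|\rho|=h\}$. Newton polygon $\mathcal{N}(P)$: convex hull of $\bigcup_{V\in\mathcal{C}(P)}(V+\mathbb{R}_{\ge0}\times\{0\})$. For $\mu\in\mathbb{R}$, $L_\mu(P)$ is the line $\{\mu h+\alpha=\alpha_0\}$ with $\alpha_0$ minimal such that it meets $\mathcal{N}(P)$, and $E_\mu(P)=L_\mu(P)\cap\mathcal{N}(P)$ (a vertex or a side). Characteristic polynomial: $\Phi_{(P;\mu)}(C)=\sum_{(\alpha,|\rho|)\in E_\mu(P)}P_{(\alpha,\rho)}\,T^{\langle\rho\rangle}|_{T=[\mu]}\,C^{|\rho|}$. $r$ is admissible for $P$ if $\Phi_{(P_i;\nu_i)}(c_i)=0$ for $i=0,\ldots,k$. *)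

theory Defs
  imports "HOL-Analysis.Analysis"
begin

text \<open>A generalized power series sum c_i x^mu_i is represented by its coefficient
function real => complex (coefficient of x^mu).  The support condition (strictly
increasing exponents tending to infinity if infinitely many) is exactly local
finiteness of the support from the left.\<close>

type_synonym gser = "real \<Rightarrow> complex"

definition gps :: "gser \<Rightarrow> bool" where
  "gps f \<longleftrightarrow> (\<forall>b. finite {\<mu>. f \<mu> \<noteq> 0 \<and> \<mu> \<le> b})"

definition gone :: gser where
  "gone = (\<lambda>\<mu>. if \<mu> = 0 then 1 else 0)"

definition gmono :: "complex \<Rightarrow> real \<Rightarrow> gser" where
  "gmono c \<nu> = (\<lambda>\<mu>. if \<mu> = \<nu> then c else 0)"

definition gmult :: "gser \<Rightarrow> gser \<Rightarrow> gser" where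
  "gmult f g = (\<lambda>\<mu>. \<Sum>a\<in>{a. f a \<noteq> 0 \<and> g (\<mu> - a) \<noteq> 0}. f a * g (\<mu> - a))"

fun gpow :: "gser \<Rightarrow> nat \<Rightarrow> gser" where
  "gpow f 0 = gone"
| "gpow f (Suc m) = gmult f (gpow f m)"

datatype dop = Dx | XDx | Qshift complex

definition valid_dop :: "dop \<Rightarrow> bool" where
  "valid_dop D = (case D of Qshift q \<Rightarrow> q \<noteq> 0 \<and> cmod q \<noteq> 1 | _ \<Rightarrow> True)"

definition qpow :: "complex \<Rightarrow> real \<Rightarrow> complex" where
  "qpow q \<mu> = q powr (complex_of_real \<mu>)"

fun dapp :: "dop \<Rightarrow> gser \<Rightarrow> gser" where
  "dapp Dx s = (\<lambda>\<mu>. complex_of_real (\<mu> + 1) * s (\<mu> + 1))"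
| "dapp XDx s = (\<lambda>\<mu>. complex_of_real \<mu> * s \<mu>)"
| "dapp (Qshift q) s = (\<lambda>\<mu>. qpow q \<mu> * s \<mu>)"

definition dnth :: "dop \<Rightarrow> nat \<Rightarrow> gser \<Rightarrow> gser" where
  "dnth D \<kappa> s = (dapp D ^^ \<kappa>) s"

fun deps :: "dop \<Rightarrow> real" where
  "deps Dx = 1"
| "deps XDx = 0"
| "deps (Qshift q) = 0"

fun brk :: "dop \<Rightarrow> real \<Rightarrow> complex" where
  "brk Dx \<mu> = complex_of_real \<mu>"
| "brk XDx \<mu> = complex_of_real \<mu>"
| "brk (Qshift q) \<mu> = qpow q \<mu>"

fun Te :: "dop \<Rightarrow> nat \<Rightarrow> complex \<Rightarrow> complex" where
  "Te Dx \<kappa> T = (\<Prod>j<\<kappa>. T - of_nat j)"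
| "Te XDx \<kappa> T = T ^ \<kappa>"
| "Te (Qshift q) \<kappa> T = T ^ \<kappa>"

text \<open>A multi-index rho in Z_{>=0}^{n+1} is a function nat => nat vanishing beyond n.
A polynomial P is given by its coefficient map rho => (series).\<close>

type_synonym dpoly = "(nat \<Rightarrow> nat) \<Rightarrow> gser"

definition nz :: "gser \<Rightarrow> bool" where
  "nz f \<longleftrightarrow> (\<exists>\<mu>. f \<mu> \<noteq> 0)"

definition valid_dpoly :: "nat \<Rightarrow> dpoly \<Rightarrow> bool" where
  "valid_dpoly n P \<longleftrightarrow> finite {\<rho>. nz (P \<rho>)}
     \<and> (\<forall>\<rho>. gps (P \<rho>))
     \<and> (\<forall>\<rho>. nz (P \<rho>) \<longrightarrow> (\<forall>\<kappa>>n. \<rho> \<kappa> = 0))"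

definition dpoly_nonzero :: "dpoly \<Rightarrow> bool" where
  "dpoly_nonzero P \<longleftrightarrow> (\<exists>\<rho>. nz (P \<rho>))"

definition absr :: "nat \<Rightarrow> (nat \<Rightarrow> nat) \<Rightarrow> nat" where
  "absr n \<rho> = (\<Sum>\<kappa>\<le>n. \<rho> \<kappa>)"

definition omg :: "nat \<Rightarrow> (nat \<Rightarrow> nat) \<Rightarrow> nat" where
  "omg n \<rho> = (\<Sum>\<kappa>\<le>n. \<kappa> * \<rho> \<kappa>)"

definition Trho :: "dop \<Rightarrow> nat \<Rightarrow> (nat \<Rightarrow> nat) \<Rightarrow> complex \<Rightarrow> complex" where
  "Trho D n \<rho> T = (\<Prod>\<kappa>\<le>n. (Te D \<kappa> T) ^ (\<rho> \<kappa>))"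

definition pcoef :: "dop \<Rightarrow> nat \<Rightarrow> dpoly \<Rightarrow> real \<Rightarrow> (nat \<Rightarrow> nat) \<Rightarrow> complex" where
  "pcoef D n P \<alpha> \<rho> = P \<rho> (\<alpha> + deps D * real (omg n \<rho>))"

text \<open>Full substitution P[s] = P(s+y_0, s'+y_1, ..., s^(n)+y_n), expanded binomially:
coefficient of y^sigma is sum_rho P_rho * prod_kappa binom(rho_k, sigma_k) (s^(k))^(rho_k - sigma_k).\<close>
definition subst :: "dop \<Rightarrow> nat \<Rightarrow> dpoly \<Rightarrow> gser \<Rightarrow> dpoly" where
  "subst D n P s = (\<lambda>\<sigma>. if (\<forall>\<kappa>>n. \<sigma> \<kappa> = 0) then
      (\<lambda>\<mu>. \<Sum>\<rho>\<in>{\<rho>. nz (P \<rho>)}.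
         gmult (P \<rho>)
           (foldr (\<lambda>\<kappa> acc. gmult
                (\<lambda>\<nu>. of_nat (\<rho> \<kappa> choose \<sigma> \<kappa>) * gpow (dnth D \<kappa> s) (\<rho> \<kappa> - \<sigma> \<kappa>) \<nu>) acc)
              [0..<Suc n] gone) \<mu>)
    else (\<lambda>\<mu>. 0))"

definition cloud :: "dop \<Rightarrow> nat \<Rightarrow> dpoly \<Rightarrow> (real \<times> real) set" where
  "cloud D n P = {(\<alpha>, real (absr n \<rho>)) | \<alpha> \<rho>. pcoef D n P \<alpha> \<rho> \<noteq> 0}"

definition newton :: "dop \<Rightarrow> nat \<Rightarrow> dpoly \<Rightarrow> (real \<times> real) set" where
  "newton D n P = convex hull (\<Union>V\<in>cloud D n P. {V + (t, 0) | t. t \<ge> 0})"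

text \<open>alpha_0 of the supporting line L_mu(P) = {mu*h + alpha = alpha_0}\<close>
definition Lval :: "dop \<Rightarrow> nat \<Rightarrow> dpoly \<Rightarrow> real \<Rightarrow> real" where
  "Lval D n P \<mu> = Inf ((\<lambda>(\<alpha>, h). \<mu> * h + \<alpha>) ` newton D n P)"

definition Eset :: "dop \<Rightarrow> nat \<Rightarrow> dpoly \<Rightarrow> real \<Rightarrow> (real \<times> real) set" where
  "Eset D n P \<mu> = {(\<alpha>, h) \<in> newton D n P. \<mu> * h + \<alpha> = Lval D n P \<mu>}"

definition charpoly :: "dop \<Rightarrow> nat \<Rightarrow> dpoly \<Rightarrow> real \<Rightarrow> complex \<Rightarrow> complex" where
  "charpoly D n P \<mu> C =
     (\<Sum>(\<alpha>, \<rho>)\<in>{(\<alpha>, \<rho>). (\<alpha>, real (absr n \<rho>)) \<in> Eset D n P \<mu> \<and> pcoef D n P \<alpha> \<rho> \<noteq> 0}.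
        pcoef D n P \<alpha> \<rho> * Trho D n \<rho> (brk D \<mu>) * C ^ (absr n \<rho>))"

fun Pseq :: "dop \<Rightarrow> nat \<Rightarrow> dpoly \<Rightarrow> (nat \<Rightarrow> complex) \<Rightarrow> (nat \<Rightarrow> real) \<Rightarrow> nat \<Rightarrow> dpoly" where
  "Pseq D n P c \<nu> 0 = P"
| "Pseq D n P c \<nu> (Suc i) = subst D n (Pseq D n P c \<nu> i) (gmono (c i) (\<nu> i))"

definition admissible :: "dop \<Rightarrow> nat \<Rightarrow> dpoly \<Rightarrow> nat \<Rightarrow> (nat \<Rightarrow> complex) \<Rightarrow> (nat \<Rightarrow> real) \<Rightarrow> bool" where
  "admissible D n P k c \<nu> \<longleftrightarrow> (\<forall>i\<le>k. charpoly D n (Pseq D n P c \<nu> i) (\<nu> i) (c i) = 0)"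

end

theory Submission
  imports Defs
begin


lemma gmult_mono_left: "gmult (gmono a e) g = (\<lambda>\<mu>. a * g (\<mu> - e))"
proof (rule ext)
  fix \<mu>
  have "{x. gmono a e x \<noteq> 0 \<and> g (\<mu> - x) \<noteq> 0} = (if a \<noteq> 0 \<and> g (\<mu> - e) \<noteq> 0 then {e} else {})"
    by (auto simp: gmono_def)
  then show "gmult (gmono a e) g \<mu> = a * g (\<mu> - e)" by (auto simp: gmult_def gmono_def)
qed

lemma gmult_mono_right: "gmult f (gmono b e) = (\<lambda>\<mu>. b * f (\<mu> - e))"
proof (rule ext)
  fix \<mu>
  have "{x. f x \<noteq> 0 \<and> gmono b e (\<mu> - x) \<noteq> 0} = (if b \<noteq> 0 \<and> f (\<mu> - e) \<noteq> 0 then {\<mu> - e} else {})"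
    by (auto simp: gmono_def)
  then show "gmult f (gmono b e) \<mu> = b * f (\<mu> - e)" by (auto simp: gmult_def gmono_def)
qed

lemma gone_mono: "gone = gmono 1 0"
  by (simp add: gone_def gmono_def)

lemma gmono_mult: "gmult (gmono a e) (gmono b f) = gmono (a*b) (e+f)"
  unfolding gmult_mono_left by (auto simp: fun_eq_iff gmono_def)

lemma gpow_mono: "gpow (gmono a e) j = gmono (a^j) (real j * e)"
  by (induction j) (simp_all add: gone_mono gmono_mult algebra_simps)

lemma dapp_mono: "dapp D (gmono a e) = gmono (a * brk D e) (e - deps D)"
  by (cases D) (auto simp: fun_eq_iff gmono_def)

lemma dnth_mono: "dnth D \<kappa> (gmono c e) = gmono (c * Te D \<kappa> (brk D e)) (e - deps D * real \<kappa>)"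
proof (induction \<kappa>)
  case 0
  then show ?case by (cases D) (simp_all add: dnth_def)
next
  case (Suc \<kappa>)
  have "dnth D (Suc \<kappa>) (gmono c e) = dapp D (dnth D \<kappa> (gmono c e))"
    by (simp add: dnth_def)
  also have "\<dots> = gmono (c * Te D \<kappa> (brk D e) * brk D (e - deps D * real \<kappa>)) (e - deps D * real \<kappa> - deps D)"
    using Suc by (simp add: dapp_mono)
  also have "\<dots> = gmono (c * Te D (Suc \<kappa>) (brk D e)) (e - deps D * real (Suc \<kappa>))"
    by (cases D) (simp_all add: algebra_simps qpow_def)
  finally show ?case .
qed

lemma scal_mono: "(\<lambda>\<nu>. k * gmono a e \<nu>) = gmono (k * a) e"
  by (auto simp: fun_eq_iff gmono_def)

lemma foldr_mono: "foldr (\<lambda>\<kappa> acc. gmult (gmono (A \<kappa>) (E \<kappa>)) acc) xs gone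
   = gmono (\<Prod>\<kappa>\<leftarrow>xs. A \<kappa>) (\<Sum>\<kappa>\<leftarrow>xs. E \<kappa>)"
  by (induction xs) (simp_all add: gone_mono gmono_mult)

lemma prod_list_set: "distinct xs \<Longrightarrow> (\<Prod>\<kappa>\<leftarrow>xs. (A \<kappa> :: complex)) = prod A (set xs)"
  by (induction xs) simp_all

definition Cf :: "dop \<Rightarrow> nat \<Rightarrow> complex \<Rightarrow> real \<Rightarrow> (nat \<Rightarrow> nat) \<Rightarrow> (nat \<Rightarrow> nat) \<Rightarrow> complex" where
  "Cf D n c e \<rho> \<sigma> = (\<Prod>\<kappa>\<le>n. of_nat (\<rho> \<kappa> choose \<sigma> \<kappa>) * (c * Te D \<kappa> (brk D e)) ^ (\<rho> \<kappa> - \<sigma> \<kappa>))"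

definition Ef :: "dop \<Rightarrow> nat \<Rightarrow> real \<Rightarrow> (nat \<Rightarrow> nat) \<Rightarrow> (nat \<Rightarrow> nat) \<Rightarrow> real" where
  "Ef D n e \<rho> \<sigma> = (\<Sum>\<kappa>\<le>n. real (\<rho> \<kappa> - \<sigma> \<kappa>) * (e - deps D * real \<kappa>))"

lemma subst_mono: "subst D n R (gmono c e) \<sigma> = (if \<forall>\<kappa>>n. \<sigma> \<kappa> = 0 then
   (\<lambda>\<mu>. \<Sum>\<rho>\<in>{\<rho>. nz (R \<rho>)}. Cf D n c e \<rho> \<sigma> * R \<rho> (\<mu> - Ef D n e \<rho> \<sigma>)) else (\<lambda>\<mu>. 0))"
proof -
  have "set [0..<Suc n] = {..n}" by auto
  then show ?thesis
    unfolding subst_def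
    by (simp add: dnth_mono gpow_mono scal_mono foldr_mono gmult_mono_right prod_list_set
        interv_sum_list_conv_sum_set_nat Cf_def Ef_def del: upt_Suc) auto
qed

definition ismin :: "dop \<Rightarrow> nat \<Rightarrow> dpoly \<Rightarrow> real \<Rightarrow> real \<Rightarrow> bool" where
  "ismin D n R \<mu> m \<longleftrightarrow> (\<exists>\<alpha> \<rho>. pcoef D n R \<alpha> \<rho> \<noteq> 0 \<and> \<mu> * real (absr n \<rho>) + \<alpha> = m)
     \<and> (\<forall>\<alpha> \<rho>. pcoef D n R \<alpha> \<rho> \<noteq> 0 \<longrightarrow> m \<le> \<mu> * real (absr n \<rho>) + \<alpha>)"

lemma ismin_unique: "ismin D n R \<mu> m \<Longrightarrow> ismin D n R \<mu> m' \<Longrightarrow> m = m'"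
  unfolding ismin_def by (metis order_antisym)

lemma pcoef_nz: "pcoef D n R \<alpha> \<rho> \<noteq> 0 \<Longrightarrow> nz (R \<rho>)"
  unfolding pcoef_def nz_def by blast

lemma valid_vanish: "valid_dpoly n R \<Longrightarrow> nz (R \<rho>) \<Longrightarrow> \<kappa> > n \<Longrightarrow> \<rho> \<kappa> = 0"
  unfolding valid_dpoly_def by blast

lemma absr0: assumes "valid_dpoly n R" "nz (R \<rho>)" "absr n \<rho> = 0" shows "\<rho> = (\<lambda>_. 0)"
proof (rule ext)
  fix \<kappa> show "\<rho> \<kappa> = 0"
  proof (cases "\<kappa> \<le> n")
    case True then show ?thesis using assms(3) unfolding absr_def by simp
  next
    case False then show ?thesis using valid_vanish[OF assms(1,2)] by simp
  qed
qed

lemma absr_zero[simp]: "absr n (\<lambda>_. 0) = 0" by (simp add: absr_def)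
lemma omg_zero[simp]: "omg n (\<lambda>_. 0) = 0" by (simp add: omg_def)

lemma Cf_nz: "Cf D n c e \<rho> \<sigma> \<noteq> 0 \<Longrightarrow> \<kappa> \<le> n \<Longrightarrow> \<sigma> \<kappa> \<le> \<rho> \<kappa>"
  unfolding Cf_def by (metis (no_types, lifting) atMost_iff binomial_eq_0 finite_atMost mult_eq_0_iff
      not_le of_nat_eq_0_iff prod_zero_iff)

lemma Cf_same: "Cf D n c e \<rho> \<rho> = 1"
  by (simp add: Cf_def)

lemma Cf_zero: "Cf D n c e \<rho> (\<lambda>_. 0) = c ^ (absr n \<rho>) * Trho D n \<rho> (brk D e)"
  by (simp add: Cf_def absr_def Trho_def power_mult_distrib prod.distrib power_sum)

lemma Ef_le: assumes "\<forall>\<kappa>\<le>n. \<sigma> \<kappa> \<le> \<rho> \<kappa>"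
  shows "Ef D n e \<rho> \<sigma> = e * (real (absr n \<rho>) - real (absr n \<sigma>)) - deps D * (real (omg n \<rho>) - real (omg n \<sigma>))"
proof -
  have "Ef D n e \<rho> \<sigma> = (\<Sum>\<kappa>\<le>n. e * (real (\<rho> \<kappa>) - real (\<sigma> \<kappa>)) - deps D * (real \<kappa> * real (\<rho> \<kappa>) - real \<kappa> * real (\<sigma> \<kappa>)))"
    unfolding Ef_def using assms by (intro sum.cong) (auto simp: of_nat_diff algebra_simps)
  also have "\<dots> = e * (real (absr n \<rho>) - real (absr n \<sigma>)) - deps D * (real (omg n \<rho>) - real (omg n \<sigma>))"
    by (simp add: sum_subtractf sum_distrib_left[symmetric] absr_def omg_def)
  finally show ?thesis .
qed

lemma pcoef_subst:
  assumes "\<forall>\<kappa>>n. \<sigma> \<kappa> = 0"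
  shows "pcoef D n (subst D n R (gmono c e)) \<alpha> \<sigma> =
    (\<Sum>\<rho>\<in>{\<rho>. nz (R \<rho>)}. Cf D n c e \<rho> \<sigma> * pcoef D n R (\<alpha> + e * real (absr n \<sigma>) - e * real (absr n \<rho>)) \<rho>)"
proof -
  have "pcoef D n (subst D n R (gmono c e)) \<alpha> \<sigma> =
     (\<Sum>\<rho>\<in>{\<rho>. nz (R \<rho>)}. Cf D n c e \<rho> \<sigma> * R \<rho> (\<alpha> + deps D * real (omg n \<sigma>) - Ef D n e \<rho> \<sigma>))"
    using assms by (simp add: pcoef_def subst_mono)
  also have "\<dots> = (\<Sum>\<rho>\<in>{\<rho>. nz (R \<rho>)}. Cf D n c e \<rho> \<sigma> * pcoef D n R (\<alpha> + e * real (absr n \<sigma>) - e * real (absr n \<rho>)) \<rho>)"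
  proof (rule sum.cong)
    fix \<rho> assume "\<rho> \<in> {\<rho>. nz (R \<rho>)}"
    show "Cf D n c e \<rho> \<sigma> * R \<rho> (\<alpha> + deps D * real (omg n \<sigma>) - Ef D n e \<rho> \<sigma>) =
        Cf D n c e \<rho> \<sigma> * pcoef D n R (\<alpha> + e * real (absr n \<sigma>) - e * real (absr n \<rho>)) \<rho>"
    proof (cases "Cf D n c e \<rho> \<sigma> = 0")
      case False
      then have "\<forall>\<kappa>\<le>n. \<sigma> \<kappa> \<le> \<rho> \<kappa>" using Cf_nz by blast
      then show ?thesis by (simp add: Ef_le pcoef_def algebra_simps)
    qed simp
  qed simp
  finally show ?thesis .
qed

lemma subst_nz_vanish: "nz (subst D n R s \<sigma>) \<Longrightarrow> \<forall>\<kappa>>n. \<sigma> \<kappa> = 0"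
  unfolding subst_def nz_def by (auto split: if_splits)

lemma pcoef_subst_nz:
  assumes "pcoef D n (subst D n R (gmono c e)) \<alpha> \<sigma> \<noteq> 0"
  obtains \<rho> where "nz (R \<rho>)" "\<forall>\<kappa>\<le>n. \<sigma> \<kappa> \<le> \<rho> \<kappa>" "Cf D n c e \<rho> \<sigma> \<noteq> 0"
    "pcoef D n R (\<alpha> + e * real (absr n \<sigma>) - e * real (absr n \<rho>)) \<rho> \<noteq> 0"
proof -
  have v: "\<forall>\<kappa>>n. \<sigma> \<kappa> = 0" using subst_nz_vanish pcoef_nz[OF assms] by blast
  from assms obtain \<rho> where "\<rho> \<in> {\<rho>. nz (R \<rho>)}"
    "Cf D n c e \<rho> \<sigma> * pcoef D n R (\<alpha> + e * real (absr n \<sigma>) - e * real (absr n \<rho>)) \<rho> \<noteq> 0"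
    unfolding pcoef_subst[OF v] using sum.not_neutral_contains_not_neutral by blast
  then show ?thesis using that Cf_nz by auto
qed

lemma absr_mono: "\<forall>\<kappa>\<le>n. \<sigma> \<kappa> \<le> \<rho> \<kappa> \<Longrightarrow> absr n \<sigma> \<le> absr n \<rho>"
  unfolding absr_def by (intro sum_mono) simp

lemma Sub1:
  assumes "ismin D n R \<mu> m" "\<mu> \<le> e" "pcoef D n (subst D n R (gmono c e)) \<alpha> \<sigma> \<noteq> 0"
  shows "m \<le> \<mu> * real (absr n \<sigma>) + \<alpha>"
proof -
  obtain \<rho> where r: "\<forall>\<kappa>\<le>n. \<sigma> \<kappa> \<le> \<rho> \<kappa>"
    "pcoef D n R (\<alpha> + e * real (absr n \<sigma>) - e * real (absr n \<rho>)) \<rho> \<noteq> 0"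
    using pcoef_subst_nz[OF assms(3)] by blast
  have "m \<le> \<mu> * real (absr n \<rho>) + (\<alpha> + e * real (absr n \<sigma>) - e * real (absr n \<rho>))"
    using assms(1) r(2) unfolding ismin_def by blast
  moreover have "0 \<le> (e - \<mu>) * (real (absr n \<rho>) - real (absr n \<sigma>))"
    using absr_mono[OF r(1)] assms(2) by simp
  ultimately show ?thesis by (simp add: algebra_simps)
qed

lemma absr_strict:
  assumes "\<forall>\<kappa>\<le>n. \<sigma> \<kappa> \<le> \<rho> \<kappa>" "\<forall>\<kappa>>n. \<sigma> \<kappa> = 0" "\<forall>\<kappa>>n. \<rho> \<kappa> = 0" "\<sigma> \<noteq> \<rho>"
  shows "absr n \<sigma> < absr n \<rho>"
proof -
  obtain \<kappa> where k: "\<sigma> \<kappa> \<noteq> \<rho> \<kappa>" using assms(4) by blast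
  then have "\<kappa> \<le> n" using assms(2,3) by (metis not_le)
  then have "\<kappa> \<in> {..n}" "\<sigma> \<kappa> < \<rho> \<kappa>" using k assms(1) by auto
  then show ?thesis unfolding absr_def
    by (intro sum_strict_mono_ex1) (use assms(1) in auto)
qed

lemma Sub2:
  assumes val: "valid_dpoly n R" and mi: "ismin D n R e m"
  shows "ismin D n (subst D n R (gmono c e)) e m"
proof -
  let ?Q = "subst D n R (gmono c e)"
  define H where "H = {\<rho>. \<exists>\<alpha>. pcoef D n R \<alpha> \<rho> \<noteq> 0 \<and> e * real (absr n \<rho>) + \<alpha> = m}"
  have HS: "H \<subseteq> {\<rho>. nz (R \<rho>)}" unfolding H_def using pcoef_nz by blast
  have fin: "finite {\<rho>. nz (R \<rho>)}" using val unfolding valid_dpoly_def by blast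
  have "H \<noteq> {}" using mi unfolding ismin_def H_def by blast
  then have "Max (absr n ` H) \<in> absr n ` H" using finite_subset[OF HS fin] by (intro Max_in) auto
  then obtain \<rho>s where rs: "\<rho>s \<in> H" "absr n \<rho>s = Max (absr n ` H)" by auto
  have rsmax: "absr n \<rho> \<le> absr n \<rho>s" if "\<rho> \<in> H" for \<rho>
    using rs(2) that finite_subset[OF HS fin] by simp
  define a where "a = m - e * real (absr n \<rho>s)"
  have pa: "pcoef D n R a \<rho>s \<noteq> 0" using rs(1) unfolding H_def a_def by (auto simp: algebra_simps)
  have rsS: "\<rho>s \<in> {\<rho>. nz (R \<rho>)}" using rs(1) HS by blast
  have vs: "\<forall>\<kappa>>n. \<rho>s \<kappa> = 0" using valid_vanish[OF val] rsS by blast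
  have "pcoef D n ?Q a \<rho>s = (\<Sum>\<rho>\<in>{\<rho>. nz (R \<rho>)}. Cf D n c e \<rho> \<rho>s * pcoef D n R (a + e * real (absr n \<rho>s) - e * real (absr n \<rho>)) \<rho>)"
    by (rule pcoef_subst[OF vs])
  also have "\<dots> = Cf D n c e \<rho>s \<rho>s * pcoef D n R (a + e * real (absr n \<rho>s) - e * real (absr n \<rho>s)) \<rho>s"
  proof -
    have "(\<Sum>\<rho>\<in>{\<rho>. nz (R \<rho>)} - {\<rho>s}. Cf D n c e \<rho> \<rho>s * pcoef D n R (a + e * real (absr n \<rho>s) - e * real (absr n \<rho>)) \<rho>) = 0"
    proof (rule sum.neutral, rule ballI)
      fix \<rho> assume r: "\<rho> \<in> {\<rho>. nz (R \<rho>)} - {\<rho>s}"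
      show "Cf D n c e \<rho> \<rho>s * pcoef D n R (a + e * real (absr n \<rho>s) - e * real (absr n \<rho>)) \<rho> = 0"
      proof (rule ccontr)
        assume "\<not> ?thesis"
        then have c1: "Cf D n c e \<rho> \<rho>s \<noteq> 0" and c2: "pcoef D n R (a + e * real (absr n \<rho>s) - e * real (absr n \<rho>)) \<rho> \<noteq> 0"
          by auto
        have "absr n \<rho>s < absr n \<rho>"
          using absr_strict[of n \<rho>s \<rho>] Cf_nz[OF c1] vs valid_vanish[OF val] r by blast
        moreover have "\<rho> \<in> H" unfolding H_def using c2 by (intro CollectI exI[of _ "a + e * real (absr n \<rho>s) - e * real (absr n \<rho>)"]) (simp add: a_def)
        ultimately show False using rsmax by fastforce
      qed
    qed
    then show ?thesis by (subst sum.remove[OF fin rsS]) simp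
  qed
  also have "\<dots> = pcoef D n R a \<rho>s" by (simp add: Cf_same)
  finally have "pcoef D n ?Q a \<rho>s \<noteq> 0" using pa by simp
  moreover have "e * real (absr n \<rho>s) + a = m" by (simp add: a_def)
  moreover have "\<forall>\<alpha> \<sigma>. pcoef D n ?Q \<alpha> \<sigma> \<noteq> 0 \<longrightarrow> m \<le> e * real (absr n \<sigma>) + \<alpha>"
    using Sub1[OF mi] by blast
  ultimately show ?thesis unfolding ismin_def by blast
qed

lemma Sub4:
  assumes val: "valid_dpoly n R" and mi: "ismin D n R \<mu> m" and lt: "\<mu> < e"
    and p0: "pcoef D n R m (\<lambda>_. 0) \<noteq> 0"
  shows "pcoef D n (subst D n R (gmono c e)) m (\<lambda>_. 0) = pcoef D n R m (\<lambda>_. 0)"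
proof -
  have fin: "finite {\<rho>. nz (R \<rho>)}" using val unfolding valid_dpoly_def by blast
  have zS: "(\<lambda>_. 0) \<in> {\<rho>. nz (R \<rho>)}" using pcoef_nz[OF p0] by simp
  have "pcoef D n (subst D n R (gmono c e)) m (\<lambda>_. 0) = (\<Sum>\<rho>\<in>{\<rho>. nz (R \<rho>)}. Cf D n c e \<rho> (\<lambda>_. 0) * pcoef D n R (m - e * real (absr n \<rho>)) \<rho>)"
    using pcoef_subst[of n "\<lambda>_. 0" D R c e m] by simp
  also have "\<dots> = Cf D n c e (\<lambda>_. 0) (\<lambda>_. 0) * pcoef D n R (m - e * real (absr n (\<lambda>_. 0::nat))) (\<lambda>_. 0)"
  proof -
    have "(\<Sum>\<rho>\<in>{\<rho>. nz (R \<rho>)} - {\<lambda>_. 0}. Cf D n c e \<rho> (\<lambda>_. 0) * pcoef D n R (m - e * real (absr n \<rho>)) \<rho>) = 0"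
    proof (rule sum.neutral, rule ballI)
      fix \<rho> assume r: "\<rho> \<in> {\<rho>. nz (R \<rho>)} - {\<lambda>_. 0}"
      show "Cf D n c e \<rho> (\<lambda>_. 0) * pcoef D n R (m - e * real (absr n \<rho>)) \<rho> = 0"
      proof (rule ccontr)
        assume "\<not> ?thesis"
        then have c2: "pcoef D n R (m - e * real (absr n \<rho>)) \<rho> \<noteq> 0" by auto
        have "m \<le> \<mu> * real (absr n \<rho>) + (m - e * real (absr n \<rho>))"
          using mi c2 unfolding ismin_def by blast
        then have "(e - \<mu>) * real (absr n \<rho>) \<le> 0" by (simp add: algebra_simps)
        then have "absr n \<rho> = 0" using lt by (simp add: mult_le_0_iff)
        then have "\<rho> = (\<lambda>_. 0)" using absr0[OF val] r by blast
        then show False using r by blast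
      qed
    qed
    then show ?thesis by (subst sum.remove[OF fin zS]) simp
  qed
  also have "\<dots> = pcoef D n R m (\<lambda>_. 0)" using Cf_same[of D n c e "\<lambda>_. 0"] by simp
  finally show ?thesis .
qed

lemma Pers:
  assumes mi: "ismin D n R \<mu> m" and p0: "pcoef D n R m (\<lambda>_. 0) \<noteq> 0" and le: "\<mu> \<le> \<mu>'"
  shows "ismin D n R \<mu>' m"
proof -
  have "m \<le> \<mu>' * real (absr n \<rho>) + \<alpha>" if "pcoef D n R \<alpha> \<rho> \<noteq> 0" for \<alpha> \<rho>
  proof -
    have "m \<le> \<mu> * real (absr n \<rho>) + \<alpha>" using mi that unfolding ismin_def by blast
    moreover have "\<mu> * real (absr n \<rho>) \<le> \<mu>' * real (absr n \<rho>)" using le by (simp add: mult_right_mono)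
    ultimately show ?thesis by simp
  qed
  moreover have "pcoef D n R m (\<lambda>_. 0) \<noteq> 0 \<and> \<mu>' * real (absr n (\<lambda>_. 0::nat)) + m = m" using p0 by simp
  ultimately show ?thesis unfolding ismin_def by blast
qed

lemma finite_below:
  assumes "\<forall>\<kappa>>(n::nat). \<rho> \<kappa> = (0::nat)"
  shows "finite {\<sigma>. \<forall>\<kappa>. \<sigma> \<kappa> \<le> \<rho> \<kappa>}"
proof -
  let ?A = "{\<sigma>. \<forall>\<kappa>. \<sigma> \<kappa> \<le> \<rho> \<kappa>}"
  have "inj_on (\<lambda>\<sigma>. restrict \<sigma> {..n}) ?A"
  proof (rule inj_onI)
    fix x y assume x: "x \<in> ?A" and y: "y \<in> ?A" and eq: "restrict x {..n} = restrict y {..n}"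
    show "x = y"
    proof
      fix \<kappa> show "x \<kappa> = y \<kappa>"
      proof (cases "\<kappa> \<le> n")
        case True then show ?thesis using fun_cong[OF eq, of \<kappa>] by simp
      next
        case False
        then have "\<rho> \<kappa> = 0" using assms not_le by blast
        moreover have "x \<kappa> \<le> \<rho> \<kappa>" "y \<kappa> \<le> \<rho> \<kappa>" using x y by simp_all
        ultimately show ?thesis by simp
      qed
    qed
  qed
  moreover have "(\<lambda>\<sigma>. restrict \<sigma> {..n}) ` ?A \<subseteq> PiE {..n} (\<lambda>\<kappa>. {..\<rho> \<kappa>})"
  proof
    fix f assume "f \<in> (\<lambda>\<sigma>. restrict \<sigma> {..n}) ` ?A"
    then obtain \<sigma> where "\<sigma> \<in> ?A" "f = restrict \<sigma> {..n}" by blast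
    then show "f \<in> PiE {..n} (\<lambda>\<kappa>. {..\<rho> \<kappa>})" by (simp add: restrict_PiE_iff)
  qed
  moreover have "finite (PiE {..n} (\<lambda>\<kappa>. {..\<rho> \<kappa>}))" by (intro finite_PiE) simp_all
  ultimately show ?thesis using finite_imageD finite_subset by metis
qed

lemma valid_subst:
  assumes val: "valid_dpoly n R"
  shows "valid_dpoly n (subst D n R (gmono c e))"
proof -
  let ?Q = "subst D n R (gmono c e)"
  let ?S = "{\<rho>. nz (R \<rho>)}"
  have fin: "finite ?S" using val unfolding valid_dpoly_def by blast
  have "{\<sigma>. nz (?Q \<sigma>)} \<subseteq> (\<Union>\<rho>\<in>?S. {\<sigma>. \<forall>\<kappa>. \<sigma> \<kappa> \<le> \<rho> \<kappa>})"
  proof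
    fix \<sigma> assume "\<sigma> \<in> {\<sigma>. nz (?Q \<sigma>)}"
    then have nzq: "nz (?Q \<sigma>)" by simp
    have v: "\<forall>\<kappa>>n. \<sigma> \<kappa> = 0" using subst_nz_vanish[OF nzq] .
    obtain \<mu> where "?Q \<sigma> \<mu> \<noteq> 0" using nzq unfolding nz_def by blast
    then have "(\<Sum>\<rho>\<in>?S. Cf D n c e \<rho> \<sigma> * R \<rho> (\<mu> - Ef D n e \<rho> \<sigma>)) \<noteq> 0"
      using v by (simp add: subst_mono)
    then obtain \<rho> where r: "\<rho> \<in> ?S" "Cf D n c e \<rho> \<sigma> * R \<rho> (\<mu> - Ef D n e \<rho> \<sigma>) \<noteq> 0"
      by (rule sum.not_neutral_contains_not_neutral)
    then have "\<forall>\<kappa>\<le>n. \<sigma> \<kappa> \<le> \<rho> \<kappa>" using Cf_nz by auto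
    then have "\<forall>\<kappa>. \<sigma> \<kappa> \<le> \<rho> \<kappa>" using v by (metis le0 not_le)
    then show "\<sigma> \<in> (\<Union>\<rho>\<in>?S. {\<sigma>. \<forall>\<kappa>. \<sigma> \<kappa> \<le> \<rho> \<kappa>})" using r(1) by blast
  qed
  moreover have "finite (\<Union>\<rho>\<in>?S. {\<sigma>. \<forall>\<kappa>. \<sigma> \<kappa> \<le> \<rho> \<kappa>})"
    using fin finite_below valid_vanish[OF val] by blast
  ultimately have f1: "finite {\<sigma>. nz (?Q \<sigma>)}" by (rule finite_subset)
  have f2: "gps (?Q \<sigma>)" for \<sigma>
    unfolding gps_def
  proof
    fix b
    have "{\<mu>. ?Q \<sigma> \<mu> \<noteq> 0 \<and> \<mu> \<le> b} \<subseteq> (\<Union>\<rho>\<in>?S. (\<lambda>x. x + Ef D n e \<rho> \<sigma>) ` {x. R \<rho> x \<noteq> 0 \<and> x \<le> b - Ef D n e \<rho> \<sigma>})"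
    proof
      fix \<mu> assume "\<mu> \<in> {\<mu>. ?Q \<sigma> \<mu> \<noteq> 0 \<and> \<mu> \<le> b}"
      then have q: "?Q \<sigma> \<mu> \<noteq> 0" "\<mu> \<le> b" by auto
      have v: "\<forall>\<kappa>>n. \<sigma> \<kappa> = 0" using q(1) subst_nz_vanish unfolding nz_def by blast
      have "(\<Sum>\<rho>\<in>?S. Cf D n c e \<rho> \<sigma> * R \<rho> (\<mu> - Ef D n e \<rho> \<sigma>)) \<noteq> 0"
        using v q(1) by (simp add: subst_mono)
      then obtain \<rho> where r: "\<rho> \<in> ?S" "Cf D n c e \<rho> \<sigma> * R \<rho> (\<mu> - Ef D n e \<rho> \<sigma>) \<noteq> 0"
        by (rule sum.not_neutral_contains_not_neutral)
      then have "\<mu> - Ef D n e \<rho> \<sigma> \<in> {x. R \<rho> x \<noteq> 0 \<and> x \<le> b - Ef D n e \<rho> \<sigma>}" using q(2) by auto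
      then have "\<mu> \<in> (\<lambda>x. x + Ef D n e \<rho> \<sigma>) ` {x. R \<rho> x \<noteq> 0 \<and> x \<le> b - Ef D n e \<rho> \<sigma>}"
        by (intro image_eqI[of _ _ "\<mu> - Ef D n e \<rho> \<sigma>"]) auto
      then show "\<mu> \<in> (\<Union>\<rho>\<in>?S. (\<lambda>x. x + Ef D n e \<rho> \<sigma>) ` {x. R \<rho> x \<noteq> 0 \<and> x \<le> b - Ef D n e \<rho> \<sigma>})"
        using r(1) by blast
    qed
    moreover have "finite (\<Union>\<rho>\<in>?S. (\<lambda>x. x + Ef D n e \<rho> \<sigma>) ` {x. R \<rho> x \<noteq> 0 \<and> x \<le> b - Ef D n e \<rho> \<sigma>})"
      using fin val unfolding valid_dpoly_def gps_def by blast
    ultimately show "finite {\<mu>. ?Q \<sigma> \<mu> \<noteq> 0 \<and> \<mu> \<le> b}" by (rule finite_subset)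
  qed
  show ?thesis unfolding valid_dpoly_def using f1 f2 subst_nz_vanish by blast
qed

lemma exists_min:
  assumes val: "valid_dpoly n R" and nzR: "dpoly_nonzero R"
  shows "\<exists>m. ismin D n R \<mu> m"
proof -
  let ?S = "{\<rho>. nz (R \<rho>)}"
  have fin: "finite ?S" using val unfolding valid_dpoly_def by blast
  obtain \<rho>0 x where x: "R \<rho>0 x \<noteq> 0" using nzR unfolding dpoly_nonzero_def nz_def by blast
  define \<alpha>0 where "\<alpha>0 = x - deps D * real (omg n \<rho>0)"
  have p0: "pcoef D n R \<alpha>0 \<rho>0 \<noteq> 0" using x by (simp add: pcoef_def \<alpha>0_def)
  define v0 where "v0 = \<mu> * real (absr n \<rho>0) + \<alpha>0"
  define W where "W = {\<mu> * real (absr n \<rho>) + \<alpha> | \<alpha> \<rho>. pcoef D n R \<alpha> \<rho> \<noteq> 0 \<and> \<mu> * real (absr n \<rho>) + \<alpha> \<le> v0}"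
  have "W \<subseteq> (\<Union>\<rho>\<in>?S. (\<lambda>x. \<mu> * real (absr n \<rho>) + x - deps D * real (omg n \<rho>)) `
            {x. R \<rho> x \<noteq> 0 \<and> x \<le> v0 - \<mu> * real (absr n \<rho>) + deps D * real (omg n \<rho>)})"
  proof
    fix w assume "w \<in> W"
    then obtain \<alpha> \<rho> where w: "w = \<mu> * real (absr n \<rho>) + \<alpha>" "pcoef D n R \<alpha> \<rho> \<noteq> 0" "\<mu> * real (absr n \<rho>) + \<alpha> \<le> v0"
      unfolding W_def by blast
    have "\<rho> \<in> ?S" using pcoef_nz[OF w(2)] by simp
    moreover have "w \<in> (\<lambda>x. \<mu> * real (absr n \<rho>) + x - deps D * real (omg n \<rho>)) `
            {x. R \<rho> x \<noteq> 0 \<and> x \<le> v0 - \<mu> * real (absr n \<rho>) + deps D * real (omg n \<rho>)}"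
      using w by (intro image_eqI[of _ _ "\<alpha> + deps D * real (omg n \<rho>)"]) (auto simp: pcoef_def)
    ultimately show "w \<in> (\<Union>\<rho>\<in>?S. (\<lambda>x. \<mu> * real (absr n \<rho>) + x - deps D * real (omg n \<rho>)) `
            {x. R \<rho> x \<noteq> 0 \<and> x \<le> v0 - \<mu> * real (absr n \<rho>) + deps D * real (omg n \<rho>)})" by blast
  qed
  moreover have "finite (\<Union>\<rho>\<in>?S. (\<lambda>x. \<mu> * real (absr n \<rho>) + x - deps D * real (omg n \<rho>)) `
            {x. R \<rho> x \<noteq> 0 \<and> x \<le> v0 - \<mu> * real (absr n \<rho>) + deps D * real (omg n \<rho>)})"
    using fin val unfolding valid_dpoly_def gps_def by blast
  ultimately have finW: "finite W" by (rule finite_subset)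
  have v0W: "v0 \<in> W" unfolding W_def v0_def using p0 by blast
  have "Min W \<in> W" using finW v0W by (intro Min_in) auto
  then obtain \<alpha>1 \<rho>1 where "Min W = \<mu> * real (absr n \<rho>1) + \<alpha>1" "pcoef D n R \<alpha>1 \<rho>1 \<noteq> 0"
    using W_def by blast
  then have a: "\<exists>\<alpha> \<rho>. pcoef D n R \<alpha> \<rho> \<noteq> 0 \<and> \<mu> * real (absr n \<rho>) + \<alpha> = Min W"
    by metis
  have b: "Min W \<le> \<mu> * real (absr n \<rho>) + \<alpha>" if "pcoef D n R \<alpha> \<rho> \<noteq> 0" for \<alpha> \<rho>
  proof (cases "\<mu> * real (absr n \<rho>) + \<alpha> \<le> v0")
    case True
    then have "\<mu> * real (absr n \<rho>) + \<alpha> \<in> W" unfolding W_def using that by blast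
    then show ?thesis using finW by simp
  next
    case False
    moreover have "Min W \<le> v0" using finW v0W by simp
    ultimately show ?thesis by simp
  qed
  show ?thesis unfolding ismin_def using a b by blast
qed

lemma ismin_nonzero: "ismin D n R \<mu> m \<Longrightarrow> dpoly_nonzero R"
  unfolding ismin_def dpoly_nonzero_def using pcoef_nz by blast



lemma newton_ge:
  assumes mi: "ismin D n R \<mu> m" and p: "p \<in> newton D n R"
  shows "m \<le> \<mu> * snd p + fst p \<and> 0 \<le> snd p"
proof -
  let ?K = "{p::real\<times>real. m \<le> \<mu> * snd p + fst p \<and> 0 \<le> snd p}"
  have cK: "convex ?K"
  proof (rule convexI)
    fix x y :: "real \<times> real" and u v :: real
    assume x: "x \<in> ?K" and y: "y \<in> ?K" and uv0: "0 \<le> u" "0 \<le> v" "u + v = 1"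
    then have uv: "0 \<le> u \<and> 0 \<le> v \<and> u + v = 1" by simp
    have "u * m \<le> u * (\<mu> * snd x + fst x)" using x uv by (simp add: mult_left_mono)
    moreover have "v * m \<le> v * (\<mu> * snd y + fst y)" using y uv by (simp add: mult_left_mono)
    moreover have "0 \<le> u * snd x" "0 \<le> v * snd y" using x y uv by simp_all
    moreover have "\<mu> * (u * snd x + v * snd y) + (u * fst x + v * fst y) = u * (\<mu> * snd x + fst x) + v * (\<mu> * snd y + fst y)"
      by (simp add: algebra_simps)
    moreover have "u * m + v * m = m" using uv by (metis distrib_right mult_1)
    ultimately have "m \<le> \<mu> * (u * snd x + v * snd y) + (u * fst x + v * fst y) \<and> 0 \<le> u * snd x + v * snd y"
      by linarith
    then show "u *\<^sub>R x + v *\<^sub>R y \<in> ?K" by simp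
  qed
  have "(\<Union>V\<in>cloud D n R. {V + (t, 0) | t. t \<ge> 0}) \<subseteq> ?K"
  proof
    fix q assume "q \<in> (\<Union>V\<in>cloud D n R. {V + (t, 0) | t. t \<ge> 0})"
    then obtain \<alpha> \<rho> t where q: "q = (\<alpha>, real (absr n \<rho>)) + (t, 0)" "t \<ge> 0" "pcoef D n R \<alpha> \<rho> \<noteq> 0"
      unfolding cloud_def by blast
    have "m \<le> \<mu> * real (absr n \<rho>) + \<alpha>" using mi q(3) unfolding ismin_def by blast
    then show "q \<in> ?K" using q by simp
  qed
  then have "newton D n R \<subseteq> ?K" unfolding newton_def by (rule hull_minimal) (rule cK)
  then show ?thesis using p by blast
qed

lemma cloud_in_newton:
  assumes "pcoef D n R \<alpha> \<rho> \<noteq> 0"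
  shows "(\<alpha>, real (absr n \<rho>)) \<in> newton D n R"
proof -
  have "(\<alpha>, real (absr n \<rho>)) \<in> cloud D n R" unfolding cloud_def
    by (rule CollectI, intro exI conjI, rule refl, rule assms)
  then have "(\<alpha>, real (absr n \<rho>)) \<in> (\<Union>V\<in>cloud D n R. {V + (t, 0) | t. t \<ge> 0})"
  proof (rule UN_I)
    show "(\<alpha>, real (absr n \<rho>)) \<in> {(\<alpha>, real (absr n \<rho>)) + (t, 0) | t. t \<ge> 0}"
      by (rule CollectI, rule exI[of _ 0]) simp
  qed
  then show ?thesis unfolding newton_def by (rule hull_inc)
qed

lemma Lval_eq:
  assumes mi: "ismin D n R \<mu> m"
  shows "Lval D n R \<mu> = m"
proof -
  obtain \<alpha> \<rho> where w: "pcoef D n R \<alpha> \<rho> \<noteq> 0" "\<mu> * real (absr n \<rho>) + \<alpha> = m"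
    using mi unfolding ismin_def by blast
  have "m \<in> (\<lambda>(\<alpha>, h). \<mu> * h + \<alpha>) ` newton D n R"
    using cloud_in_newton[OF w(1)] w(2) by (intro image_eqI[of _ _ "(\<alpha>, real (absr n \<rho>))"]) simp_all
  moreover have "m \<le> x" if xin: "x \<in> (\<lambda>(\<alpha>, h). \<mu> * h + \<alpha>) ` newton D n R" for x
  proof -
    obtain p where "p \<in> newton D n R" "x = (\<lambda>(\<alpha>, h). \<mu> * h + \<alpha>) p" using xin by blast
    then show ?thesis using newton_ge[OF mi] by (cases p) fastforce
  qed
  ultimately show ?thesis unfolding Lval_def by (rule cInf_eq_minimum)
qed

lemma Eset_eq:
  assumes mi: "ismin D n R \<mu> m"
  shows "Eset D n R \<mu> = {(\<alpha>, h) \<in> newton D n R. \<mu> * h + \<alpha> = m}"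
  unfolding Eset_def Lval_eq[OF mi] ..

lemma G1:
  assumes val: "valid_dpoly n R" and mi: "ismin D n R \<mu> m" and p0: "pcoef D n R m (\<lambda>_. 0) = 0"
    and v: "v \<in> (\<Union>V\<in>cloud D n R. {V + (t, 0) | t. t \<ge> 0})" and phi: "\<mu> * snd v + fst v = m"
  shows "1 \<le> snd v"
proof -
  obtain \<alpha> \<rho> t where q: "v = (\<alpha>, real (absr n \<rho>)) + (t, 0)" "t \<ge> 0" "pcoef D n R \<alpha> \<rho> \<noteq> 0"
    using v unfolding cloud_def by blast
  have "m \<le> \<mu> * real (absr n \<rho>) + \<alpha>" using mi q(3) unfolding ismin_def by blast
  then have t0: "t = 0" and a: "\<alpha> = m - \<mu> * real (absr n \<rho>)" using q phi by auto
  show ?thesis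
  proof (cases "absr n \<rho> = 0")
    case True
    then have "\<rho> = (\<lambda>_. 0)" using absr0[OF val pcoef_nz[OF q(3)]] by blast
    then show ?thesis using q(3) a p0 True by simp
  next
    case False
    then show ?thesis using q t0 by simp
  qed
qed

lemma newtonN:
  assumes val: "valid_dpoly n R" and mi: "ismin D n R \<mu> m"
  shows "1 \<le> Inf (snd ` Eset D n R \<mu>) \<longleftrightarrow> pcoef D n R m (\<lambda>_. 0) = 0"
proof
  assume ge: "1 \<le> Inf (snd ` Eset D n R \<mu>)"
  show "pcoef D n R m (\<lambda>_. 0) = 0"
  proof (rule ccontr)
    assume p0: "pcoef D n R m (\<lambda>_. 0) \<noteq> 0"
    have "(m, 0) \<in> newton D n R" using cloud_in_newton[OF p0] by simp
    then have "(m, 0) \<in> Eset D n R \<mu>" unfolding Eset_eq[OF mi] by simp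
    then have "0 \<in> snd ` Eset D n R \<mu>" by (metis image_eqI snd_conv)
    moreover have "bdd_below (snd ` Eset D n R \<mu>)"
      unfolding Eset_eq[OF mi] using newton_ge[OF mi] by (intro bdd_belowI[of _ 0]) auto
    ultimately have "Inf (snd ` Eset D n R \<mu>) \<le> 0" by (rule cInf_lower)
    then show False using ge by simp
  qed
next
  assume p0: "pcoef D n R m (\<lambda>_. 0) = 0"
  let ?G = "(\<Union>V\<in>cloud D n R. {V + (t, 0) | t. t \<ge> 0})"
  obtain \<alpha> \<rho> where w: "pcoef D n R \<alpha> \<rho> \<noteq> 0" "\<mu> * real (absr n \<rho>) + \<alpha> = m"
    using mi unfolding ismin_def by blast
  have "(\<alpha>, real (absr n \<rho>)) \<in> Eset D n R \<mu>"
    unfolding Eset_eq[OF mi] using cloud_in_newton[OF w(1)] w(2) by simp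
  then have ne: "snd ` Eset D n R \<mu> \<noteq> {}" by blast
  have "1 \<le> h" if hin: "h \<in> snd ` Eset D n R \<mu>" for h
  proof -
    obtain p where pE: "p \<in> Eset D n R \<mu>" and hp: "h = snd p" using hin by blast
    have pN: "p \<in> convex hull ?G" and phip: "\<mu> * snd p + fst p = m"
      using pE unfolding Eset_eq[OF mi] newton_def by auto
    obtain S u where S: "finite S" "S \<subseteq> ?G" "\<forall>x\<in>S. 0 \<le> u x" "sum u S = 1"
        "(\<Sum>v\<in>S. u v *\<^sub>R v) = p"
      using pN unfolding convex_hull_explicit by blast
    have fp: "fst p = (\<Sum>v\<in>S. u v * fst v)" and sp: "snd p = (\<Sum>v\<in>S. u v * snd v)"
      using S(5) by (auto simp: fst_sum snd_sum)
    have geS: "m \<le> \<mu> * snd v + fst v" if "v \<in> S" for v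
    proof -
      have "v \<in> newton D n R" unfolding newton_def using S(2) that by (intro hull_inc) blast
      then show ?thesis using newton_ge[OF mi] by blast
    qed
    have "(\<Sum>v\<in>S. u v * (\<mu> * snd v + fst v - m)) = \<mu> * snd p + fst p - m * sum u S"
      unfolding fp sp by (simp add: algebra_simps sum.distrib sum_subtractf sum_distrib_left sum_distrib_right)
    also have "\<dots> = 0" using phip S(4) by simp
    finally have sum0: "(\<Sum>v\<in>S. u v * (\<mu> * snd v + fst v - m)) = 0" .
    have "\<forall>v\<in>S. u v * (\<mu> * snd v + fst v - m) = 0"
      using sum_nonneg_eq_0_iff[OF S(1), of "\<lambda>v. u v * (\<mu> * snd v + fst v - m)"] sum0 geS S(3)
      by (simp add: mult_nonneg_nonneg)
    have "u v \<le> u v * snd v" if vS: "v \<in> S" for v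
    proof (cases "u v = 0")
      case False
      then have "\<mu> * snd v + fst v = m" using \<open>\<forall>v\<in>S. u v * (\<mu> * snd v + fst v - m) = 0\<close> vS by auto
      then have "1 \<le> snd v" using G1[OF val mi p0] S(2) vS by blast
      then show ?thesis using S(3) vS by (metis mult.right_neutral mult_left_mono)
    qed simp
    then have "sum u S \<le> (\<Sum>v\<in>S. u v * snd v)" by (rule sum_mono)
    then show ?thesis using hp sp S(4) by simp
  qed
  then show "1 \<le> Inf (snd ` Eset D n R \<mu>)" using ne by (intro cInf_greatest) auto
qed

lemma charpoly_eq:
  assumes val: "valid_dpoly n R" and mi: "ismin D n R \<mu> m"
  shows "charpoly D n R \<mu> C = (\<Sum>\<rho>\<in>{\<rho>. nz (R \<rho>)}.
      pcoef D n R (m - \<mu> * real (absr n \<rho>)) \<rho> * Trho D n \<rho> (brk D \<mu>) * C ^ (absr n \<rho>))"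
proof -
  let ?S = "{\<rho>. nz (R \<rho>)}"
  let ?S' = "{\<rho>\<in>?S. pcoef D n R (m - \<mu> * real (absr n \<rho>)) \<rho> \<noteq> 0}"
  let ?f = "\<lambda>\<alpha> \<rho>. pcoef D n R \<alpha> \<rho> * Trho D n \<rho> (brk D \<mu>) * C ^ (absr n \<rho>)"
  have fin: "finite ?S" using val unfolding valid_dpoly_def by blast
  have T: "{(\<alpha>, \<rho>). (\<alpha>, real (absr n \<rho>)) \<in> Eset D n R \<mu> \<and> pcoef D n R \<alpha> \<rho> \<noteq> 0}
      = (\<lambda>\<rho>. (m - \<mu> * real (absr n \<rho>), \<rho>)) ` ?S'"
  proof (rule set_eqI)
    fix x :: "real \<times> (nat \<Rightarrow> nat)"
    obtain \<alpha> \<rho> where x: "x = (\<alpha>, \<rho>)" by (cases x)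
    show "x \<in> {(\<alpha>, \<rho>). (\<alpha>, real (absr n \<rho>)) \<in> Eset D n R \<mu> \<and> pcoef D n R \<alpha> \<rho> \<noteq> 0} \<longleftrightarrow>
        x \<in> (\<lambda>\<rho>. (m - \<mu> * real (absr n \<rho>), \<rho>)) ` ?S'"
    proof
      assume "x \<in> {(\<alpha>, \<rho>). (\<alpha>, real (absr n \<rho>)) \<in> Eset D n R \<mu> \<and> pcoef D n R \<alpha> \<rho> \<noteq> 0}"
      then have a: "\<mu> * real (absr n \<rho>) + \<alpha> = m" "pcoef D n R \<alpha> \<rho> \<noteq> 0"
        unfolding x Eset_eq[OF mi] by auto
      then have "\<alpha> = m - \<mu> * real (absr n \<rho>)" by simp
      then show "x \<in> (\<lambda>\<rho>. (m - \<mu> * real (absr n \<rho>), \<rho>)) ` ?S'"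
        using a pcoef_nz[OF a(2)] unfolding x by auto
    next
      assume "x \<in> (\<lambda>\<rho>. (m - \<mu> * real (absr n \<rho>), \<rho>)) ` ?S'"
      then have a: "\<alpha> = m - \<mu> * real (absr n \<rho>)" "pcoef D n R \<alpha> \<rho> \<noteq> 0" unfolding x by auto
      then show "x \<in> {(\<alpha>, \<rho>). (\<alpha>, real (absr n \<rho>)) \<in> Eset D n R \<mu> \<and> pcoef D n R \<alpha> \<rho> \<noteq> 0}"
        unfolding x Eset_eq[OF mi] using cloud_in_newton[OF a(2)] by simp
    qed
  qed
  have "charpoly D n R \<mu> C = (\<Sum>(\<alpha>, \<rho>)\<in>(\<lambda>\<rho>. (m - \<mu> * real (absr n \<rho>), \<rho>)) ` ?S'. ?f \<alpha> \<rho>)"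
    unfolding charpoly_def T ..
  also have "\<dots> = (\<Sum>\<rho>\<in>?S'. ?f (m - \<mu> * real (absr n \<rho>)) \<rho>)"
    by (subst sum.reindex) (auto simp: inj_on_def)
  also have "\<dots> = (\<Sum>\<rho>\<in>?S. ?f (m - \<mu> * real (absr n \<rho>)) \<rho>)"
    by (rule sum.mono_neutral_left[OF fin]) auto
  finally show ?thesis .
qed

lemma Sub3:
  assumes val: "valid_dpoly n R" and mi: "ismin D n R e m"
  shows "pcoef D n (subst D n R (gmono c e)) m (\<lambda>_. 0) = charpoly D n R e c"
proof -
  have "pcoef D n (subst D n R (gmono c e)) m (\<lambda>_. 0) = (\<Sum>\<rho>\<in>{\<rho>. nz (R \<rho>)}. Cf D n c e \<rho> (\<lambda>_. 0) * pcoef D n R (m - e * real (absr n \<rho>)) \<rho>)"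
    using pcoef_subst[of n "\<lambda>_. 0" D R c e m] by simp
  also have "\<dots> = charpoly D n R e c"
    unfolding charpoly_eq[OF val mi] by (intro sum.cong) (simp_all add: Cf_zero)
  finally show ?thesis .
qed

theorem lemma4:
  fixes D :: dop and n k :: nat and P :: dpoly
    and c :: "nat \<Rightarrow> complex" and \<nu> :: "nat \<Rightarrow> real"
  assumes "valid_dop D"
    and "valid_dpoly n P"
    and "dpoly_nonzero P"
    and "\<forall>i\<le>k. c i \<noteq> 0"
    and "\<forall>i<k. \<nu> i < \<nu> (Suc i)"
  shows "admissible D n P k c \<nu> \<longleftrightarrow>
           Inf (snd ` Eset D n (Pseq D n P c \<nu> (Suc k)) (\<nu> k)) \<ge> 1"
proof -
  let ?PS = "Pseq D n P c \<nu>"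
  have val: "valid_dpoly n (?PS i)" for i
    by (induction i) (simp_all add: assms(2) valid_subst)
  have nzP: "dpoly_nonzero (?PS i)" for i
  proof (induction i)
    case 0 then show ?case using assms(3) by simp
  next
    case (Suc i)
    obtain m where "ismin D n (?PS i) (\<nu> i) m" using exists_min[OF val Suc] by blast
    then have "ismin D n (?PS (Suc i)) (\<nu> i) m" using Sub2[OF val] by simp
    then show ?case by (rule ismin_nonzero)
  qed
  define Z where "Z j \<longleftrightarrow> (\<forall>m. ismin D n (?PS (Suc j)) (\<nu> j) m \<longrightarrow> pcoef D n (?PS (Suc j)) m (\<lambda>_. 0) = 0)" for j
  have F1: "Z i \<longleftrightarrow> charpoly D n (?PS i) (\<nu> i) (c i) = 0" for i
  proof -
    obtain m where m: "ismin D n (?PS i) (\<nu> i) m" using exists_min[OF val nzP] by blast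
    then have m2: "ismin D n (?PS (Suc i)) (\<nu> i) m" using Sub2[OF val] by simp
    have "pcoef D n (?PS (Suc i)) m (\<lambda>_. 0) = charpoly D n (?PS i) (\<nu> i) (c i)"
      using Sub3[OF val m] by simp
    moreover have "\<forall>m'. ismin D n (?PS (Suc i)) (\<nu> i) m' \<longleftrightarrow> m' = m"
      using m2 ismin_unique by blast
    ultimately show ?thesis unfolding Z_def by simp
  qed
  have F2: "\<not> Z (Suc i)" if h1: "i < k" and h2: "\<not> Z i" for i
  proof -
    obtain m where m: "ismin D n (?PS (Suc i)) (\<nu> i) m" and p: "pcoef D n (?PS (Suc i)) m (\<lambda>_. 0) \<noteq> 0"
      using h2 unfolding Z_def by blast
    have lt: "\<nu> i < \<nu> (Suc i)" using assms(5) h1 by blast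
    let ?Q = "?PS (Suc (Suc i))"
    have Qeq: "?Q = subst D n (?PS (Suc i)) (gmono (c (Suc i)) (\<nu> (Suc i)))" by simp
    have pq: "pcoef D n ?Q m (\<lambda>_. 0) \<noteq> 0"
      using Sub4[OF val m lt p] p Qeq by simp
    have "ismin D n ?Q (\<nu> i) m"
      unfolding ismin_def
    proof
      show "\<exists>\<alpha> \<rho>. pcoef D n ?Q \<alpha> \<rho> \<noteq> 0 \<and> \<nu> i * real (absr n \<rho>) + \<alpha> = m"
        using pq by (intro exI[of _ m] exI[of _ "\<lambda>_. 0"]) simp
      show "\<forall>\<alpha> \<rho>. pcoef D n ?Q \<alpha> \<rho> \<noteq> 0 \<longrightarrow> m \<le> \<nu> i * real (absr n \<rho>) + \<alpha>"
      proof (intro allI impI)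
        fix \<alpha> \<rho> assume "pcoef D n ?Q \<alpha> \<rho> \<noteq> 0"
        then have "pcoef D n (subst D n (?PS (Suc i)) (gmono (c (Suc i)) (\<nu> (Suc i)))) \<alpha> \<rho> \<noteq> 0"
          using Qeq by simp
        then show "m \<le> \<nu> i * real (absr n \<rho>) + \<alpha>" by (rule Sub1[OF m less_imp_le[OF lt]])
      qed
    qed
    then have "ismin D n ?Q (\<nu> (Suc i)) m" by (rule Pers[OF _ pq less_imp_le[OF lt]])
    then show ?thesis unfolding Z_def using pq by blast
  qed
  have F3: "\<not> Z (i + d)" if "i + d \<le> k" "\<not> Z i" for i d
    using that
  proof (induction d)
    case 0 then show ?case by simp
  next
    case (Suc d)
    then have "\<not> Z (i + d)" by simp
    then show ?case using F2[of "i + d"] Suc.prems by simp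
  qed
  have A: "admissible D n P k c \<nu> \<longleftrightarrow> Z k"
  proof
    assume "admissible D n P k c \<nu>"
    then show "Z k" unfolding admissible_def using F1 by blast
  next
    assume zk: "Z k"
    have "Z i" if "i \<le> k" for i
    proof -
      have "i + (k - i) = k" using that by simp
      then show ?thesis using F3[of i "k - i"] zk by auto
    qed
    then show "admissible D n P k c \<nu>" unfolding admissible_def using F1 by blast
  qed
  obtain m where m: "ismin D n (?PS (Suc k)) (\<nu> k) m" using exists_min[OF val nzP] by blast
  have "Z k \<longleftrightarrow> pcoef D n (?PS (Suc k)) m (\<lambda>_. 0) = 0"
  proof -
    have "\<forall>m'. ismin D n (?PS (Suc k)) (\<nu> k) m' \<longleftrightarrow> m' = m"
      using m ismin_unique by blast
    then show ?thesis unfolding Z_def by simp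
  qed
  then show ?thesis using A newtonN[OF val m] by simp
qed

end
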